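(* Let $\Lambda$ be a finite nonempty set and $m,c\ge1$ natural numbers with $|\Lambda|$ dividing $m$. Then (1) $f^{10}_\Lambda(m,c)\le m\cdot HJ(|\Lambda|^m,c)$; (2) $f^{9,*}_\Lambda(m,c)\le m\cdot HJ(|\Lambda|^m,c)$ (with the convention $m\cdot\omega=\omega$).
   Context: Let $\Lambda$ be a finite nonempty alphabet, $[k]=\{1,\dots,k\}$, and ${}^{[k]}\Lambda$ the set of functions $[k]\to\Lambda$. A $c$-colouring of ${}^{[k]}\Lambda$ is a function $d$ from ${}^{[k]}\Lambda$ into a set with at most $c$ elements. A configuration for $(k,m)$ is a pair $(\langle M_\ell:\ell<m\rangle,\eta^* )$ where (a) the $M_\ell\subseteq[k]$ are pairwise disjoint and $\eta^*$ is a function from $[k]\setminus\bigcup_{\ell<m}M_\ell$ into $\Lambda$. Its set of points is $S=\{\eta\in{}^{[k]}\Lambda:\eta^*\subseteq\eta$ and each $\eta\restriction M_\ell$ is constant$\}$, and for $\eta\in S$, $\alpha\in\Lambda$ let $\mathrm{cnt}_\eta(\alpha)=|\{\ell<m:\eta\restriction M_\ell$ is constantly $\alpha\}|$. Consider the conditions: (b) $|M_\ell|=|M_0|>0$ for all $\ell<m$; (b$'$) $M_\ell\neq\emptyset$ for all $\ell<m$; (c) $d(\nu_1)=d(\nu_2)$ whenever $\nu_1,\nu_2\in S$ and $\mathrm{cnt}_{\nu_1}(\alpha)=\mathrm{cnt}_{\nu_2}(\alpha)=m/|\Lambda|$ for every $\alpha\in\Lambda$; (c$^+$) $d(\nu_1)=d(\nu_2)$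 whenever $\nu_1,\nu_2\in S$ and $\mathrm{cnt}_{\nu_1}(\alpha)=\mathrm{cnt}_{\nu_2}(\alpha)$ for every $\alpha\in\Lambda$; (c$'$) $d\restriction S$ is constant; (d) for all $\alpha,\beta\in\Lambda$, $|\{a:\eta^*(a)=\alpha\}|=|\{a:\eta^*(a)=\beta\}|$. For a list $X$ of these conditions, the associated number is the least $k\le\omega$ divisible by $|\Lambda|$ (with $\omega$ if none exists) such that for every $c$-colouring $d$ of ${}^{[k]}\Lambda$ there is a configuration for $(k,m)$ satisfying (a) and all conditions in $X$. Then $f^{10}_\Lambda(m,c)$ uses (b),(c),(d); $f^{9,*}_\Lambda(m,c)$ uses (b),(c$^+$); $HJ_\Lambda(m,c)$ uses (b$'$),(c$'$). Finally $HJ(n,c)=HJ_{\{1,\dots,n\}}(1,c)$ (the Hales–Jewett number for an $n$-letter alphabet). *)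

theory Defs
  imports Main "HOL-Library.FuncSet" "HOL-Library.Extended_Nat"
begin

text \<open>A configuration for (k,m) is a family
  M :: nat => nat set (only indices l < m matter) and a function eta* on
  [k] minus the union of the M l, again extensional.\<close>

definition cfg_dom :: "nat \<Rightarrow> nat \<Rightarrow> (nat \<Rightarrow> nat set) \<Rightarrow> nat set" where
  "cfg_dom k m M = {1..k} - (\<Union>l<m. M l)"

definition is_config :: "'a set \<Rightarrow> nat \<Rightarrow> nat \<Rightarrow> (nat \<Rightarrow> nat set) \<Rightarrow> (nat \<Rightarrow> 'a) \<Rightarrow> bool" where
  "is_config L k m M e \<longleftrightarrow>
     (\<forall>l<m. M l \<subseteq> {1..k}) \<and>
     (\<forall>l<m. \<forall>l'<m. l \<noteq> l' \<longrightarrow> M l \<inter> M l' = {}) \<and>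
     e \<in> cfg_dom k m M \<rightarrow>\<^sub>E L"

definition cfg_points :: "'a set \<Rightarrow> nat \<Rightarrow> nat \<Rightarrow> (nat \<Rightarrow> nat set) \<Rightarrow> (nat \<Rightarrow> 'a) \<Rightarrow> (nat \<Rightarrow> 'a) set" where
  "cfg_points L k m M e =
     {\<eta> \<in> {1..k} \<rightarrow>\<^sub>E L. (\<forall>a\<in>cfg_dom k m M. \<eta> a = e a) \<and>
                         (\<forall>l<m. \<forall>a\<in>M l. \<forall>b\<in>M l. \<eta> a = \<eta> b)}"

definition cnt :: "nat \<Rightarrow> (nat \<Rightarrow> nat set) \<Rightarrow> (nat \<Rightarrow> 'a) \<Rightarrow> 'a \<Rightarrow> nat" where
  "cnt m M \<eta> \<alpha> = card {l. l < m \<and> (\<forall>a\<in>M l. \<eta> a = \<alpha>)}"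

definition cond_b :: "nat \<Rightarrow> (nat \<Rightarrow> nat set) \<Rightarrow> bool" where
  "cond_b m M \<longleftrightarrow> (\<forall>l<m. card (M l) = card (M 0) \<and> card (M 0) > 0)"

definition cond_b' :: "nat \<Rightarrow> (nat \<Rightarrow> nat set) \<Rightarrow> bool" where
  "cond_b' m M \<longleftrightarrow> (\<forall>l<m. M l \<noteq> {})"

definition cond_c :: "'a set \<Rightarrow> nat \<Rightarrow> nat \<Rightarrow> (nat \<Rightarrow> nat set) \<Rightarrow> (nat \<Rightarrow> 'a) \<Rightarrow> ((nat \<Rightarrow> 'a) \<Rightarrow> nat) \<Rightarrow> bool" where
  "cond_c L k m M e d \<longleftrightarrow>
     (\<forall>\<nu>1\<in>cfg_points L k m M e. \<forall>\<nu>2\<in>cfg_points L k m M e.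
        (\<forall>\<alpha>\<in>L. real (cnt m M \<nu>1 \<alpha>) = real m / real (card L) \<and>
                 real (cnt m M \<nu>2 \<alpha>) = real m / real (card L)) \<longrightarrow> d \<nu>1 = d \<nu>2)"

definition cond_c_plus :: "'a set \<Rightarrow> nat \<Rightarrow> nat \<Rightarrow> (nat \<Rightarrow> nat set) \<Rightarrow> (nat \<Rightarrow> 'a) \<Rightarrow> ((nat \<Rightarrow> 'a) \<Rightarrow> nat) \<Rightarrow> bool" where
  "cond_c_plus L k m M e d \<longleftrightarrow>
     (\<forall>\<nu>1\<in>cfg_points L k m M e. \<forall>\<nu>2\<in>cfg_points L k m M e.
        (\<forall>\<alpha>\<in>L. cnt m M \<nu>1 \<alpha> = cnt m M \<nu>2 \<alpha>) \<longrightarrow> d \<nu>1 = d \<nu>2)"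

definition cond_c' :: "'a set \<Rightarrow> nat \<Rightarrow> nat \<Rightarrow> (nat \<Rightarrow> nat set) \<Rightarrow> (nat \<Rightarrow> 'a) \<Rightarrow> ((nat \<Rightarrow> 'a) \<Rightarrow> nat) \<Rightarrow> bool" where
  "cond_c' L k m M e d \<longleftrightarrow>
     (\<forall>\<nu>1\<in>cfg_points L k m M e. \<forall>\<nu>2\<in>cfg_points L k m M e. d \<nu>1 = d \<nu>2)"

definition cond_d :: "'a set \<Rightarrow> nat \<Rightarrow> nat \<Rightarrow> (nat \<Rightarrow> nat set) \<Rightarrow> (nat \<Rightarrow> 'a) \<Rightarrow> bool" where
  "cond_d L k m M e \<longleftrightarrow>
     (\<forall>\<alpha>\<in>L. \<forall>\<beta>\<in>L. card {a\<in>cfg_dom k m M. e a = \<alpha>} = card {a\<in>cfg_dom k m M. e a = \<beta>})"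

text \<open>A c-colouring is modelled as a map into {..<c} (any colouring into a set
  with at most c elements can be injected into {..<c}).\<close>

definition colouring_prop ::
  "'a set \<Rightarrow> nat \<Rightarrow> nat \<Rightarrow>
   (nat \<Rightarrow> (nat \<Rightarrow> nat set) \<Rightarrow> (nat \<Rightarrow> 'a) \<Rightarrow> ((nat \<Rightarrow> 'a) \<Rightarrow> nat) \<Rightarrow> bool) \<Rightarrow> nat \<Rightarrow> bool" where
  "colouring_prop L m c P k \<longleftrightarrow>
     (\<forall>d. d ` ({1..k} \<rightarrow>\<^sub>E L) \<subseteq> {..<c} \<longrightarrow>
        (\<exists>M e. is_config L k m M e \<and> P k M e d))"

definition assoc_num ::
  "'a set \<Rightarrow> nat \<Rightarrow> nat \<Rightarrow>
   (nat \<Rightarrow> (nat \<Rightarrow> nat set) \<Rightarrow> (nat \<Rightarrow> 'a) \<Rightarrow> ((nat \<Rightarrow> 'a) \<Rightarrow> nat) \<Rightarrow> bool) \<Rightarrow> enat" where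
  "assoc_num L m c P =
     (if \<exists>k. card L dvd k \<and> colouring_prop L m c P k
      then enat (LEAST k. card L dvd k \<and> colouring_prop L m c P k)
      else \<infinity>)"

definition f10 :: "'a set \<Rightarrow> nat \<Rightarrow> nat \<Rightarrow> enat" where
  "f10 L m c = assoc_num L m c
     (\<lambda>k M e d. cond_b m M \<and> cond_c L k m M e d \<and> cond_d L k m M e)"

definition f9star :: "'a set \<Rightarrow> nat \<Rightarrow> nat \<Rightarrow> enat" where
  "f9star L m c = assoc_num L m c
     (\<lambda>k M e d. cond_b m M \<and> cond_c_plus L k m M e d)"

definition HJ_L :: "'a set \<Rightarrow> nat \<Rightarrow> nat \<Rightarrow> enat" where
  "HJ_L L m c = assoc_num L m c
     (\<lambda>k M e d. cond_b' m M \<and> cond_c' L k m M e d)"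

definition HJ :: "nat \<Rightarrow> nat \<Rightarrow> enat" where
  "HJ n c = HJ_L {1..n} 1 c"

end

theory Submission
  imports Defs
begin

lemma rc_row: "0 < (k0::nat) \<Longrightarrow> j \<in> {1..k0} \<Longrightarrow> (l*k0+j-1) div k0 = l"
proof -
  assume a: "0 < k0" "j \<in> {1..k0}"
  have "l*k0+j-1 = l*k0 + (j-1)" using a by (simp add: Nat.add_diff_assoc)
  moreover have "j - 1 < k0" using a by auto
  moreover have "(l*k0 + (j-1)) div k0 = l" using \<open>j - 1 < k0\<close> by simp
  ultimately show ?thesis by metis
qed

lemma rc_col: "0 < (k0::nat) \<Longrightarrow> j \<in> {1..k0} \<Longrightarrow> (l*k0+j-1) mod k0 + 1 = j"
proof -
  assume a: "0 < k0" "j \<in> {1..k0}"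
  have "l*k0+j-1 = l*k0 + (j-1)" using a by (simp add: Nat.add_diff_assoc)
  moreover have "j - 1 < k0" using a by auto
  moreover have "(l*k0 + (j-1)) mod k0 = j - 1" using \<open>j - 1 < k0\<close> by simp
  ultimately have "(l*k0+j-1) mod k0 = j - 1" by metis
  then show ?thesis using a by simp
qed

lemma rc_decomp: "1 \<le> (p::nat) \<Longrightarrow> 0 < k0 \<Longrightarrow> p = ((p-1) div k0)*k0 + ((p-1) mod k0 + 1)"
proof -
  assume a: "1 \<le> p" "0 < k0"
  have "p - 1 = ((p-1) div k0)*k0 + (p-1) mod k0" by (rule div_mult_mod_eq[symmetric])
  then show ?thesis using a by linarith
qed

lemma rc_rowlt: "(p::nat) \<in> {1..m*k0} \<Longrightarrow> (p-1) div k0 < m"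
proof -
  assume a: "p \<in> {1..m*k0}"
  then have "p - 1 < m*k0" by auto
  then show ?thesis by (simp add: less_mult_imp_div_less)
qed

lemma rc_colin: "0 < (k0::nat) \<Longrightarrow> (p-1) mod k0 + 1 \<in> {1..k0}"
  using mod_less_divisor[of k0 "p-1"] by (auto intro: Suc_leI)

lemma rc_in: "(l::nat) < m \<Longrightarrow> j \<in> {1..k0} \<Longrightarrow> l*k0+j \<in> {1..m*k0}"
proof -
  assume a: "l < m" "j \<in> {1..k0}"
  have "l*k0 + j \<le> l*k0 + k0" using a by auto
  also have "\<dots> = (l+1)*k0" by simp
  also have "\<dots> \<le> m*k0" using a by (intro mult_right_mono) auto
  finally show ?thesis using a by auto
qed

lemma key:
  fixes L :: "'a set" and G :: "(nat \<Rightarrow> 'a) set" and Q :: "('a \<Rightarrow> nat) \<Rightarrow> bool"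
    and d :: "(nat \<Rightarrow> 'a) \<Rightarrow> nat" and m k0 c :: nat
  assumes fin: "finite L" and m: "m \<ge> 1"
   and G_def: "G = {h \<in> {..<m} \<rightarrow>\<^sub>E L. Q (\<lambda>\<alpha>. card {l. l < m \<and> h l = \<alpha>})}"
   and Gne: "G \<noteq> {}"
   and HJk: "colouring_prop {1..card L ^ m} 1 c (\<lambda>k M e d. cond_b' 1 M \<and> cond_c' {1..card L ^ m} k 1 M e d) k0"
   and dcol: "d ` ({1..m*k0} \<rightarrow>\<^sub>E L) \<subseteq> {..<c}"
  shows "\<exists>M e. is_config L (m*k0) m M e \<and> cond_b m M \<and>
     (\<forall>\<nu>1\<in>cfg_points L (m*k0) m M e. \<forall>\<nu>2\<in>cfg_points L (m*k0) m M e.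
         Q (cnt m M \<nu>1) \<and> Q (cnt m M \<nu>2) \<longrightarrow> d \<nu>1 = d \<nu>2) \<and>
     ((\<exists>t. \<forall>h\<in>G. \<forall>\<alpha>\<in>L. card {l. l<m \<and> h l = \<alpha>} = t) \<longrightarrow> cond_d L (m*k0) m M e)"
proof -
  define N where "N = card L ^ m"
  define k where "k = m*k0"
  have Gsub: "G \<subseteq> {..<m} \<rightarrow>\<^sub>E L" using G_def by auto
  have finPi: "finite ({..<m} \<rightarrow>\<^sub>E L)" using fin by (simp add: finite_PiE)
  have "card ({..<m} \<rightarrow>\<^sub>E L) = N" unfolding N_def using card_PiE[of "{..<m}" "\<lambda>_. L"] by simp
  then have cardG: "card G \<le> N" using card_mono[OF finPi Gsub] by simp
  have finG: "finite G" using finite_subset[OF Gsub finPi] .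
  obtain f where f: "bij_betw f {0..<card G} G" using ex_bij_betw_nat_finite[OF finG] by blast
  have cG0: "card G > 0" using finG Gne by (simp add: card_gt_0_iff)
  define g where "g a = f (if a - 1 < card G then a - 1 else 0)" for a :: nat
  have gG: "g a \<in> G" for a using f cG0 unfolding g_def bij_betw_def by auto
  have gsurj: "\<exists>a\<in>{1..N}. g a = h" if "h \<in> G" for h
  proof -
    have "h \<in> f ` {0..<card G}" using f that unfolding bij_betw_def by simp
    then obtain i where i: "i < card G" "f i = h" by auto
    show ?thesis using i cardG by (intro bexI[of _ "i+1"]) (auto simp: g_def)
  qed
  define row where "row p = (p - 1) div k0" for p :: nat
  define col where "col p = (p - 1) mod k0 + 1" for p :: nat
  define \<eta> where "\<eta> x = (\<lambda>p. if p \<in> {1..k} then g (x (col p)) (row p) else undefined)" for x :: "nat \<Rightarrow> nat"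
  define d' where "d' x = d (\<eta> x)" for x
  have rowlt: "row p < m" if "p \<in> {1..k}" for p
    using rc_rowlt that unfolding row_def k_def by blast
  have gL: "g a l \<in> L" if "l < m" for a l
    using gG[of a] Gsub that by (auto simp: PiE_mem)
  have \<eta>Pi: "\<eta> x \<in> {1..k} \<rightarrow>\<^sub>E L" for x
  proof (rule PiE_I)
    fix p assume p: "p \<in> {1..k}"
    then show "\<eta> x p \<in> L" using gL[OF rowlt[OF p]] unfolding \<eta>_def by simp
  next
    fix p assume "p \<notin> {1..k}" then show "\<eta> x p = undefined" unfolding \<eta>_def by auto
  qed
  have d'col: "d' ` ({1..k0} \<rightarrow>\<^sub>E {1..N}) \<subseteq> {..<c}" using dcol \<eta>Pi unfolding d'_def k_def by auto
  have hj: "\<forall>d::(nat\<Rightarrow>nat)\<Rightarrow>nat. d ` ({1..k0} \<rightarrow>\<^sub>E {1..N}) \<subseteq> {..<c} \<longrightarrow>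
     (\<exists>M e. is_config {1..N} k0 1 M e \<and> cond_b' 1 M \<and> cond_c' {1..N} k0 1 M e d)"
    using HJk unfolding colouring_prop_def N_def .
  have "\<exists>M e. is_config {1..N} k0 1 M e \<and> cond_b' 1 M \<and> cond_c' {1..N} k0 1 M e d'"
    using hj d'col by blast
  then obtain M0f e0 where cfg0: "is_config {1..N} k0 1 M0f e0" and b0: "cond_b' 1 M0f"
      and c0: "cond_c' {1..N} k0 1 M0f e0 d'" by blast
  define M0 where "M0 = M0f 0"
  have dom0: "cfg_dom k0 1 M0f = {1..k0} - M0" unfolding cfg_dom_def M0_def by auto
  have M0sub: "M0 \<subseteq> {1..k0}" and M0ne: "M0 \<noteq> {}"
    using cfg0 b0 unfolding is_config_def cond_b'_def M0_def by auto
  have e0Pi: "e0 \<in> ({1..k0} - M0) \<rightarrow>\<^sub>E {1..N}" using cfg0 dom0 unfolding is_config_def by simp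
  have k0pos: "0 < k0" using M0sub M0ne by (cases k0) auto
  obtain j0 where j0: "j0 \<in> M0" using M0ne by blast
  define M where "M l = (\<lambda>j. l*k0 + j) ` M0" for l
  have rowM: "row (l*k0+j) = l" if "j \<in> {1..k0}" for l j using rc_row[OF k0pos that] row_def by simp
  have colM: "col (l*k0+j) = j" if "j \<in> {1..k0}" for l j using rc_col[OF k0pos that] col_def by simp
  have decomp: "p = row p * k0 + col p" if "p \<in> {1..k}" for p
    using rc_decomp[OF _ k0pos, of p] that unfolding row_def col_def by auto
  have colin: "col p \<in> {1..k0}" for p using rc_colin[OF k0pos] unfolding col_def by blast
  have inM: "p \<in> M l \<longleftrightarrow> p \<in> {1..k} \<and> row p = l \<and> col p \<in> M0" if l: "l < m" for p l
  proof
    assume "p \<in> M l" then obtain j where j: "j\<in>M0" "p = l*k0+j" unfolding M_def by auto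
    then show "p \<in> {1..k} \<and> row p = l \<and> col p \<in> M0"
      using rc_in[OF l, of j k0] M0sub rowM colM unfolding k_def by auto
  next
    assume h: "p \<in> {1..k} \<and> row p = l \<and> col p \<in> M0"
    then have "p = l*k0 + col p" using decomp by auto
    then show "p \<in> M l" unfolding M_def using h by blast
  qed
  have dom: "cfg_dom k m M = {p \<in> {1..k}. col p \<notin> M0}"
  proof (intro equalityI subsetI)
    fix p assume p: "p \<in> cfg_dom k m M"
    then have p1: "p \<in> {1..k}" and p2: "\<forall>l<m. p \<notin> M l" unfolding cfg_dom_def by auto
    have "col p \<notin> M0"
    proof
      assume "col p \<in> M0"
      then have "p \<in> M (row p)" using inM[OF rowlt[OF p1]] p1 by simp
      then show False using p2 rowlt[OF p1] by blast
    qed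
    then show "p \<in> {p \<in> {1..k}. col p \<notin> M0}" using p1 by simp
  next
    fix p assume p: "p \<in> {p \<in> {1..k}. col p \<notin> M0}"
    have "\<forall>l<m. p \<notin> M l" using inM p by simp
    then show "p \<in> cfg_dom k m M" using p unfolding cfg_dom_def by auto
  qed
  define e where "e p = (if p \<in> cfg_dom k m M then g (e0 (col p)) (row p) else undefined)" for p
  have cfg: "is_config L k m M e"
    unfolding is_config_def
  proof (intro conjI allI impI)
    fix l assume l: "l < m" then show "M l \<subseteq> {1..k}" using inM[OF l] by auto
  next
    fix l l' assume "l < m" "l' < m" "l \<noteq> l'" then show "M l \<inter> M l' = {}" using inM[of l] inM[of l'] by auto
  next
    show "e \<in> cfg_dom k m M \<rightarrow>\<^sub>E L"
    proof (rule PiE_I)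
      fix p assume p: "p \<in> cfg_dom k m M"
      then have "p \<in> {1..k}" using dom by blast
      then show "e p \<in> L" using p gL[OF rowlt] unfolding e_def by simp
    qed (simp add: e_def)
  qed
  have finM0: "finite M0" using M0sub by (rule finite_subset) simp
  have cardM: "card (M l) = card M0" for l
    unfolding M_def by (rule card_image) (simp add: inj_on_def)
  have condb: "cond_b m M" unfolding cond_b_def cardM using finM0 M0ne card_gt_0_iff by blast
  have cover: "\<exists>x \<in> cfg_points {1..N} k0 1 M0f e0. \<nu> = \<eta> x"
    if \<nu>: "\<nu> \<in> cfg_points L k m M e" and q: "Q (cnt m M \<nu>)" for \<nu>
  proof -
    have \<nu>all: "\<nu> \<in> {1..k} \<rightarrow>\<^sub>E L \<and> (\<forall>a\<in>cfg_dom k m M. \<nu> a = e a) \<and>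
       (\<forall>l<m. \<forall>a\<in>M l. \<forall>b\<in>M l. \<nu> a = \<nu> b)"
      using \<nu> unfolding cfg_points_def mem_Collect_eq .
    then have \<nu>Pi: "\<nu> \<in> {1..k} \<rightarrow>\<^sub>E L" and \<nu>e: "\<forall>a\<in>cfg_dom k m M. \<nu> a = e a"
      and \<nu>c: "\<forall>l<m. \<forall>a\<in>M l. \<forall>b\<in>M l. \<nu> a = \<nu> b" by blast+
    define h where "h = (\<lambda>l. if l < m then \<nu> (l*k0+j0) else undefined)"
    have j0M: "l*k0+j0 \<in> M l" for l unfolding M_def using j0 by blast
    have hPi: "h \<in> {..<m} \<rightarrow>\<^sub>E L"
    proof (rule PiE_I)
      fix l assume "l \<in> {..<m}"
      then have "l*k0+j0 \<in> {1..k}" using rc_in[of l m j0 k0] j0 M0sub unfolding k_def by auto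
      then show "h l \<in> L" using \<nu>Pi \<open>l \<in> {..<m}\<close> unfolding h_def by (auto simp: PiE_mem)
    qed (simp add: h_def)
    have cnteq: "cnt m M \<nu> = (\<lambda>\<alpha>. card {l. l<m \<and> h l = \<alpha>})"
    proof
      fix \<alpha>
      have "(\<forall>a\<in>M l. \<nu> a = \<alpha>) \<longleftrightarrow> \<nu> (l*k0+j0) = \<alpha>" if "l < m" for l
        using \<nu>c that j0M[of l] by blast
      then have "{l. l < m \<and> (\<forall>a\<in>M l. \<nu> a = \<alpha>)} = {l. l<m \<and> h l = \<alpha>}"
        unfolding h_def by auto
      then show "cnt m M \<nu> \<alpha> = card {l. l<m \<and> h l = \<alpha>}" unfolding cnt_def by simp
    qed
    have "h \<in> G" using G_def hPi q cnteq by auto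
    then obtain a where a: "a \<in> {1..N}" "g a = h" using gsurj by blast
    define x where "x j = (if j \<in> M0 then a else if j \<in> {1..k0} then e0 j else undefined)" for j
    have xpt: "x \<in> cfg_points {1..N} k0 1 M0f e0"
      unfolding cfg_points_def dom0
    proof (intro CollectI conjI ballI allI impI)
      show "x \<in> {1..k0} \<rightarrow>\<^sub>E {1..N}"
      proof (rule PiE_I)
        fix j assume "j \<in> {1..k0}" then show "x j \<in> {1..N}"
          using a e0Pi unfolding x_def by (auto simp: PiE_mem)
      qed (use M0sub in \<open>auto simp: x_def\<close>)
    next
      fix j assume "j \<in> {1..k0} - M0" then show "x j = e0 j" unfolding x_def by simp
    next
      fix l i j assume "l < (1::nat)" "i \<in> M0f l" "j \<in> M0f l"
      then show "x i = x j" unfolding x_def M0_def by simp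
    qed
    have "\<nu> = \<eta> x"
    proof (rule ext)
      fix p
      show "\<nu> p = \<eta> x p"
      proof (cases "p \<in> {1..k}")
        case False
        have "\<nu> p = undefined" using \<nu>Pi False by (rule PiE_arb)
        then show ?thesis using False unfolding \<eta>_def by auto
      next
        case pk: True
        show ?thesis
        proof (cases "col p \<in> M0")
          case True
          have "p \<in> M (row p)" using inM[OF rowlt[OF pk]] pk True by simp
          moreover have "row p * k0 + j0 \<in> M (row p)" by (rule j0M)
          ultimately have "\<nu> p = \<nu> (row p * k0 + j0)" using \<nu>c rowlt[OF pk] by blast
          also have "\<dots> = h (row p)" using rowlt[OF pk] unfolding h_def by simp
          also have "\<dots> = g (x (col p)) (row p)" using True a unfolding x_def by simp
          also have "\<dots> = \<eta> x p" using pk unfolding \<eta>_def by simp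
          finally show ?thesis .
        next
          case False
          have pd: "p \<in> cfg_dom k m M" using dom pk False by blast
          then have "\<nu> p = e p" using \<nu>e by blast
          also have "\<dots> = \<eta> x p" using pd pk False colin[of p] unfolding e_def \<eta>_def x_def by simp
          finally show ?thesis .
        qed
      qed
    qed
    then show ?thesis using xpt by blast
  qed
  have condc: "\<forall>\<nu>1\<in>cfg_points L k m M e. \<forall>\<nu>2\<in>cfg_points L k m M e.
         Q (cnt m M \<nu>1) \<and> Q (cnt m M \<nu>2) \<longrightarrow> d \<nu>1 = d \<nu>2"
  proof (intro ballI impI)
    fix \<nu>1 \<nu>2 assume n1: "\<nu>1 \<in> cfg_points L k m M e" and n2: "\<nu>2 \<in> cfg_points L k m M e"
      and qq: "Q (cnt m M \<nu>1) \<and> Q (cnt m M \<nu>2)"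
    obtain x1 where x1: "x1 \<in> cfg_points {1..N} k0 1 M0f e0" "\<nu>1 = \<eta> x1" using cover n1 qq by blast
    obtain x2 where x2: "x2 \<in> cfg_points {1..N} k0 1 M0f e0" "\<nu>2 = \<eta> x2" using cover n2 qq by blast
    have "d' x1 = d' x2" using c0 x1 x2 unfolding cond_c'_def by blast
    then show "d \<nu>1 = d \<nu>2" using x1 x2 unfolding d'_def by simp
  qed
  have condd: "cond_d L k m M e" if t: "\<forall>h\<in>G. \<forall>\<alpha>\<in>L. card {l. l<m \<and> h l = \<alpha>} = t" for t
  proof -
    have ce: "card {p\<in>cfg_dom k m M. e p = \<alpha>} = card ({1..k0}-M0) * t" if \<alpha>: "\<alpha> \<in> L" for \<alpha>
    proof -
      define S where "S = (SIGMA j:{1..k0}-M0. {l. l<m \<and> g (e0 j) l = \<alpha>})"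
      have bij: "bij_betw (\<lambda>(j,l). l*k0+j) S {p\<in>cfg_dom k m M. e p = \<alpha>}"
        unfolding bij_betw_def
      proof
        show "inj_on (\<lambda>(j,l). l*k0+j) S"
        proof (rule inj_onI, clarify)
          fix j l j' l' assume "(j,l) \<in> S" "(j',l') \<in> S" and eq: "l*k0+j = l'*k0+j'"
          then have jj: "j \<in> {1..k0}" "j' \<in> {1..k0}" unfolding S_def by auto
          have "l = l'" using rowM[OF jj(1), of l] rowM[OF jj(2), of l'] eq by metis
          moreover have "j = j'" using colM[OF jj(1), of l] colM[OF jj(2), of l'] eq by metis
          ultimately show "j = j' \<and> l = l'" by simp
        qed
      next
        show "(\<lambda>(j,l). l*k0+j) ` S = {p\<in>cfg_dom k m M. e p = \<alpha>}"
        proof (intro equalityI subsetI)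
          fix p assume "p \<in> (\<lambda>(j,l). l*k0+j) ` S"
          then obtain j l where jl: "(j,l) \<in> S" "p = l*k0+j" by auto
          then have jl2: "j \<in> {1..k0}" "j \<notin> M0" "l < m" "g (e0 j) l = \<alpha>" unfolding S_def by auto
          have pk: "p \<in> {1..k}" using rc_in[OF jl2(3) jl2(1)] jl unfolding k_def by simp
          have pd: "p \<in> cfg_dom k m M" using dom pk colM[OF jl2(1)] jl2 jl by simp
          show "p \<in> {p\<in>cfg_dom k m M. e p = \<alpha>}"
            using pd jl jl2 rowM[OF jl2(1)] colM[OF jl2(1)] unfolding e_def by simp
        next
          fix p assume "p \<in> {p\<in>cfg_dom k m M. e p = \<alpha>}"
          then have pd: "p \<in> cfg_dom k m M" and pe: "e p = \<alpha>" by auto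
          then have pk: "p \<in> {1..k}" and pc: "col p \<notin> M0" using dom by auto
          have "(col p, row p) \<in> S" unfolding S_def using pk pc colin[of p] rowlt[OF pk] pe pd
            unfolding e_def by simp
          then show "p \<in> (\<lambda>(j,l). l*k0+j) ` S" using decomp[OF pk] by force
        qed
      qed
      have "card {p\<in>cfg_dom k m M. e p = \<alpha>} = card S" using bij_betw_same_card[OF bij] by simp
      also have "\<dots> = (\<Sum>j\<in>{1..k0}-M0. card {l. l<m \<and> g (e0 j) l = \<alpha>})"
        unfolding S_def by (rule card_SigmaI) auto
      also have "\<dots> = (\<Sum>j\<in>{1..k0}-M0. t)"
        using t gG \<alpha> by (intro sum.cong) auto
      finally show ?thesis by simp
    qed
    show ?thesis unfolding cond_d_def using ce by simp
  qed
  show ?thesis using cfg condb condc condd unfolding k_def by blast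
qed


lemma card_mod_class:
  fixes q m i :: nat
  assumes q: "0 < q" and dv: "q dvd m" and i: "i < q"
  shows "card {l. l<m \<and> l mod q = i} = m div q"
proof -
  have m: "m = (m div q) * q" using dv by simp
  have "{l. l<m \<and> l mod q = i} = (\<lambda>t. t*q + i) ` {..<m div q}"
  proof (intro equalityI subsetI)
    fix l assume "l \<in> {l. l<m \<and> l mod q = i}"
    then have l: "l < m" "l mod q = i" by auto
    have "l div q < m div q" using l(1) m by (metis less_mult_imp_div_less)
    moreover have "l = (l div q) * q + i" using l(2) by (metis div_mult_mod_eq)
    ultimately show "l \<in> (\<lambda>t. t*q + i) ` {..<m div q}" by blast
  next
    fix l assume "l \<in> (\<lambda>t. t*q + i) ` {..<m div q}"
    then obtain t where t: "t < m div q" "l = t*q + i" by auto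
    have "t*q + i < t*q + q" using i by simp
    also have "\<dots> = (t+1)*q" by simp
    also have "\<dots> \<le> (m div q)*q" using t(1) by (intro mult_right_mono) auto
    finally have "l < m" using t(2) m by simp
    moreover have "l mod q = i" using t(2) i by simp
    ultimately show "l \<in> {l. l<m \<and> l mod q = i}" by simp
  qed
  moreover have "inj_on (\<lambda>t. t*q + i) {..<m div q}" using q by (auto simp: inj_on_def)
  ultimately show ?thesis by (simp add: card_image)
qed

lemma balanced_exists:
  fixes L :: "'a set" and m :: nat
  assumes fin: "finite L" and ne: "L \<noteq> {}" and dv: "card L dvd m"
  shows "\<exists>h \<in> {..<m} \<rightarrow>\<^sub>E L. \<forall>\<alpha>\<in>L. card {l. l<m \<and> h l = \<alpha>} = m div card L"
proof -
  define q where "q = card L"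
  have q: "0 < q" using fin ne unfolding q_def by (simp add: card_gt_0_iff)
  obtain b where b: "bij_betw b {0..<q} L" using ex_bij_betw_nat_finite[OF fin] unfolding q_def by blast
  define h where "h l = (if l < m then b (l mod q) else undefined)" for l
  have hPi: "h \<in> {..<m} \<rightarrow>\<^sub>E L"
  proof (rule PiE_I)
    fix l assume "l \<in> {..<m}"
    then show "h l \<in> L" using b q unfolding h_def bij_betw_def by auto
  qed (simp add: h_def)
  have "card {l. l<m \<and> h l = \<alpha>} = m div q" if \<alpha>: "\<alpha> \<in> L" for \<alpha>
  proof -
    obtain i where i: "i < q" "b i = \<alpha>" using b \<alpha> unfolding bij_betw_def by (auto simp: image_iff)
    have "{l. l<m \<and> h l = \<alpha>} = {l. l<m \<and> l mod q = i}"
    proof (intro Collect_cong conj_cong refl)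
      fix l assume "l < m"
      have "b (l mod q) = b i \<longleftrightarrow> l mod q = i"
        using b i q unfolding bij_betw_def inj_on_def by (metis atLeastLessThan_iff mod_less_divisor zero_le)
      then show "h l = \<alpha> \<longleftrightarrow> l mod q = i" using \<open>l < m\<close> i unfolding h_def by simp
    qed
    then show ?thesis using card_mod_class[OF q dv[folded q_def] i(1)] by simp
  qed
  then show ?thesis using hPi unfolding q_def by blast
qed

lemma assoc_le:
  assumes "card L dvd k" "colouring_prop L m c P k"
  shows "assoc_num L m c P \<le> enat k"
  using assms unfolding assoc_num_def by (auto intro: Least_le)

theorem mainTheorem2:
  fixes L :: "'a set" and m c :: nat
  assumes "finite L" and "L \<noteq> {}" and "m \<ge> 1" and "c \<ge> 1" and "card L dvd m"
  shows "f10 L m c \<le> enat m * HJ (card L ^ m) c \<and>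
         f9star L m c \<le> enat m * HJ (card L ^ m) c"
proof -
  note fin = assms(1) and ne = assms(2) and m = assms(3) and dv = assms(5)
  define N where "N = card L ^ m"
  define PH where "PH = (\<lambda>k M e d. cond_b' 1 M \<and> cond_c' {1..N} k 1 M e (d::(nat\<Rightarrow>nat)\<Rightarrow>nat))"
  have HJeq: "HJ N c = assoc_num {1..N} 1 c PH" unfolding HJ_def HJ_L_def PH_def ..
  have q: "0 < card L" using fin ne by (simp add: card_gt_0_iff)
  show ?thesis
  proof (cases "\<exists>k. card {1..N} dvd k \<and> colouring_prop {1..N} 1 c PH k")
    case False
    then have "HJ N c = \<infinity>" unfolding HJeq assoc_num_def by simp
    moreover have "enat m * \<infinity> = \<infinity>" using m by (simp add: imult_is_infinity)
    ultimately show ?thesis unfolding N_def by simp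
  next
    case True
    define k0 where "k0 = (LEAST k. card {1..N} dvd k \<and> colouring_prop {1..N} 1 c PH k)"
    have HJk0: "HJ N c = enat k0" unfolding HJeq assoc_num_def k0_def using True by simp
    have HJk: "colouring_prop {1..card L ^ m} 1 c (\<lambda>k M e d. cond_b' 1 M \<and> cond_c' {1..card L ^ m} k 1 M e d) k0"
      using LeastI_ex[OF True] unfolding k0_def PH_def N_def by blast
    have dvk: "card L dvd m * k0" using dv by simp
    have prod: "enat m * HJ N c = enat (m * k0)" using HJk0 by simp
    define Q10 where "Q10 = (\<lambda>f::'a\<Rightarrow>nat. \<forall>\<alpha>\<in>L. f \<alpha> = m div card L)"
    define G10 where "G10 = {h \<in> {..<m} \<rightarrow>\<^sub>E L. Q10 (\<lambda>\<alpha>. card {l. l < m \<and> h l = \<alpha>})}"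
    have G10ne: "G10 \<noteq> {}" using balanced_exists[OF fin ne dv] unfolding G10_def Q10_def by auto
    have cp10: "colouring_prop L m c (\<lambda>k M e d. cond_b m M \<and> cond_c L k m M e d \<and> cond_d L k m M e) (m*k0)"
      unfolding colouring_prop_def
    proof (intro allI impI)
      fix d :: "(nat \<Rightarrow> 'a) \<Rightarrow> nat" assume dcol: "d ` ({1..m*k0} \<rightarrow>\<^sub>E L) \<subseteq> {..<c}"
      obtain M e where Me: "is_config L (m*k0) m M e" "cond_b m M"
        and cc: "\<forall>\<nu>1\<in>cfg_points L (m*k0) m M e. \<forall>\<nu>2\<in>cfg_points L (m*k0) m M e.
         Q10 (cnt m M \<nu>1) \<and> Q10 (cnt m M \<nu>2) \<longrightarrow> d \<nu>1 = d \<nu>2"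
        and cd: "(\<exists>t. \<forall>h\<in>G10. \<forall>\<alpha>\<in>L. card {l. l<m \<and> h l = \<alpha>} = t) \<longrightarrow> cond_d L (m*k0) m M e"
        using key[OF fin m G10_def G10ne HJk dcol] by blast
      have "\<forall>h\<in>G10. \<forall>\<alpha>\<in>L. card {l. l<m \<and> h l = \<alpha>} = m div card L"
        unfolding G10_def Q10_def by auto
      then have cdd: "cond_d L (m*k0) m M e" using cd by blast
      have rdiv: "real m / real (card L) = real (m div card L)" using dv by (simp add: real_of_nat_div)
      have ccc: "cond_c L (m*k0) m M e d"
        unfolding cond_c_def
      proof (intro ballI impI)
        fix \<nu>1 \<nu>2 assume n: "\<nu>1 \<in> cfg_points L (m*k0) m M e" "\<nu>2 \<in> cfg_points L (m*k0) m M e"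
          and h: "\<forall>\<alpha>\<in>L. real (cnt m M \<nu>1 \<alpha>) = real m / real (card L) \<and>
                 real (cnt m M \<nu>2 \<alpha>) = real m / real (card L)"
        have "Q10 (cnt m M \<nu>1) \<and> Q10 (cnt m M \<nu>2)" unfolding Q10_def using h rdiv by simp
        then show "d \<nu>1 = d \<nu>2" using cc n by blast
      qed
      show "\<exists>M e. is_config L (m*k0) m M e \<and> cond_b m M \<and> cond_c L (m*k0) m M e d \<and> cond_d L (m*k0) m M e"
        using Me ccc cdd by blast
    qed
    define Q9 where "Q9 = (\<lambda>f::'a\<Rightarrow>nat. True)"
    define G9 where "G9 = {h \<in> {..<m} \<rightarrow>\<^sub>E L. Q9 (\<lambda>\<alpha>. card {l. l < m \<and> h l = \<alpha>})}"
    have G9ne: "G9 \<noteq> {}" using balanced_exists[OF fin ne dv] unfolding G9_def Q9_def by auto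
    have cp9: "colouring_prop L m c (\<lambda>k M e d. cond_b m M \<and> cond_c_plus L k m M e d) (m*k0)"
      unfolding colouring_prop_def
    proof (intro allI impI)
      fix d :: "(nat \<Rightarrow> 'a) \<Rightarrow> nat" assume dcol: "d ` ({1..m*k0} \<rightarrow>\<^sub>E L) \<subseteq> {..<c}"
      obtain M e where Me: "is_config L (m*k0) m M e" "cond_b m M"
        and cc: "\<forall>\<nu>1\<in>cfg_points L (m*k0) m M e. \<forall>\<nu>2\<in>cfg_points L (m*k0) m M e.
         Q9 (cnt m M \<nu>1) \<and> Q9 (cnt m M \<nu>2) \<longrightarrow> d \<nu>1 = d \<nu>2"
        using key[OF fin m G9_def G9ne HJk dcol] by blast
      have "cond_c_plus L (m*k0) m M e d" unfolding cond_c_plus_def using cc unfolding Q9_def by blast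
      then show "\<exists>M e. is_config L (m*k0) m M e \<and> cond_b m M \<and> cond_c_plus L (m*k0) m M e d"
        using Me by blast
    qed
    have "f10 L m c \<le> enat (m*k0)" unfolding f10_def by (rule assoc_le[OF dvk cp10])
    moreover have "f9star L m c \<le> enat (m*k0)" unfolding f9star_def by (rule assoc_le[OF dvk cp9])
    ultimately show ?thesis using prod unfolding N_def by simp
  qed
qed

end
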